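(* Let $p$ be a design of a random treatment vector $\mathbf Z\in\{0,1\}^n$ and suppose each unit $i$ has potential outcomes of the form $Y_i(z,e)=A_i(z)+B_i(e)+zC_i(e)$, $z\in\{0,1\}$, $e\in\{0,\dots,K_i-1\}$ (with $K_i\ge2$), where $B_i(0)=C_i(0)=0$. Define $$\hat\beta_1=\frac{\sum_i Y_i^{obs}I(Z_i=1,E_i=0)}{\sum_iI(Z_i=1,E_i=0)}-\frac{\sum_i Y_i^{obs}I(Z_i=0,E_i=0)}{\sum_iI(Z_i=0,E_i=0)},\quad \hat\beta_2=\frac{\sum_i Y_i^{obs}I(Z_i=1,E_i=1)}{\sum_iI(Z_i=1,E_i=1)}-\frac{\sum_i Y_i^{obs}I(Z_i=0,E_i=0)}{\sum_iI(Z_i=0,E_i=0)},$$ and assume the design makes the denominators appearing in each estimator positive with probability one. Then $$\mathbb E[\hat\beta_1]=\sum_{i=1}^n\big(A_i(1)\beta_i(1,0)-A_i(0)\beta_i(0,0)\big),$$ $$\mathbb E[\hat\beta_2]=\sum_{i=1}^n\big(A_i(1)\beta_i(1,1)-A_i(0)\beta_i(0,0)\big)+\sum_{i=1}^nB_i(1)\beta_i(1,1)+\sum_{i=1}^nC_i(1)\beta_i(1,1),$$ where $\beta_i(z,e)=\mathbb E\!\left[\frac{I(Z_i=z,E_i=e)}{\sum_jI(Z_j=z,E_j=e)}\right]$.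
   Context: Each unit $i$ has an interference neighborhood $N_i$ and exposure function $f$ mapping $\{0,1\}^{N_i}$ onto $\{0,\dots,K_i-1\}$, with random exposure $E_i=f(\mathbf Z_{N_i})$; level $0$ means not exposed and level $1$ means exposed. Observed outcome $Y_i^{obs}=Y_i(Z_i,E_i)$; expectations are over the design. *)

theory Defs
  imports "HOL-Probability.Probability"
begin

text \<open>Units are the elements of a finite type 'u (so n = CARD('u)); a treatment
  vector is Z :: 'u \<Rightarrow> bool (True = treated); a design is a pmf over treatment
  vectors.\<close>

definition ind :: "('u \<Rightarrow> ('u \<Rightarrow> bool) \<Rightarrow> nat) \<Rightarrow> 'u \<Rightarrow> bool \<Rightarrow> nat \<Rightarrow> ('u \<Rightarrow> bool) \<Rightarrow> real" where
  "ind E i z e Z = (if Z i = z \<and> E i Z = e then 1 else 0)"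

definition Yobs :: "('u \<Rightarrow> bool \<Rightarrow> nat \<Rightarrow> real) \<Rightarrow> ('u \<Rightarrow> ('u \<Rightarrow> bool) \<Rightarrow> nat) \<Rightarrow> 'u \<Rightarrow> ('u \<Rightarrow> bool) \<Rightarrow> real" where
  "Yobs Y E i Z = Y i (Z i) (E i Z)"

definition cell_mean :: "('u::finite \<Rightarrow> bool \<Rightarrow> nat \<Rightarrow> real) \<Rightarrow> ('u \<Rightarrow> ('u \<Rightarrow> bool) \<Rightarrow> nat) \<Rightarrow> bool \<Rightarrow> nat \<Rightarrow> ('u \<Rightarrow> bool) \<Rightarrow> real" where
  "cell_mean Y E z e Z = (\<Sum>i\<in>UNIV. Yobs Y E i Z * ind E i z e Z) / (\<Sum>i\<in>UNIV. ind E i z e Z)"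

definition beta_hat1 where
  "beta_hat1 Y E Z = cell_mean Y E True 0 Z - cell_mean Y E False 0 Z"

definition beta_hat2 where
  "beta_hat2 Y E Z = cell_mean Y E True 1 Z - cell_mean Y E False 0 Z"

definition beta_w :: "('u::finite \<Rightarrow> bool) pmf \<Rightarrow> ('u \<Rightarrow> ('u \<Rightarrow> bool) \<Rightarrow> nat) \<Rightarrow> 'u \<Rightarrow> bool \<Rightarrow> nat \<Rightarrow> real" where
  "beta_w p E i z e = measure_pmf.expectation p (\<lambda>Z. ind E i z e Z / (\<Sum>j\<in>UNIV. ind E j z e Z))"

end

theory Submission
  imports Defs
begin

lemma cm_eq:
  fixes Y :: "'u::finite \<Rightarrow> bool \<Rightarrow> nat \<Rightarrow> real"
  shows "cell_mean Y E z e Z = (\<Sum>i\<in>UNIV. Y i z e * (ind E i z e Z / (\<Sum>j\<in>UNIV. ind E j z e Z)))"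
  unfolding cell_mean_def sum_divide_distrib
  by (rule sum.cong) (auto simp: ind_def Yobs_def)

lemma exp_cm:
  fixes Y :: "'u::finite \<Rightarrow> bool \<Rightarrow> nat \<Rightarrow> real" and p :: "('u \<Rightarrow> bool) pmf"
  shows "measure_pmf.expectation p (cell_mean Y E z e) = (\<Sum>i\<in>UNIV. Y i z e * beta_w p E i z e)"
proof -
  have fin: "finite (set_pmf p)" by (rule finite_subset[of _ UNIV]) auto
  have "measure_pmf.expectation p (cell_mean Y E z e)
      = measure_pmf.expectation p (\<lambda>Z. \<Sum>i\<in>UNIV. Y i z e * (ind E i z e Z / (\<Sum>j\<in>UNIV. ind E j z e Z)))"
    by (rule arg_cong[where f="measure_pmf.expectation p"]) (rule ext, rule cm_eq)
  also have "\<dots> = (\<Sum>i\<in>UNIV. Y i z e * beta_w p E i z e)"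
    unfolding beta_w_def
    by (subst Bochner_Integration.integral_sum) (auto intro: integrable_measure_pmf_finite[OF fin] simp del: times_divide_eq_right simp add: Bochner_Integration.integral_mult_right_zero)
  finally show ?thesis .
qed

theorem proposition11:
  fixes p :: "('u::finite \<Rightarrow> bool) pmf"
    and N :: "'u \<Rightarrow> 'u set"
    and E :: "'u \<Rightarrow> ('u \<Rightarrow> bool) \<Rightarrow> nat"
    and K :: "'u \<Rightarrow> nat"
    and A :: "'u \<Rightarrow> bool \<Rightarrow> real"
    and B C :: "'u \<Rightarrow> nat \<Rightarrow> real"
    and Y :: "'u \<Rightarrow> bool \<Rightarrow> nat \<Rightarrow> real"
  assumes K2: "\<And>i. K i \<ge> 2"
    and E_local: "\<And>i Z Z'. (\<forall>j\<in>N i. Z j = Z' j) \<Longrightarrow> E i Z = E i Z'"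
    and E_onto: "\<And>i. range (E i) = {0..<K i}"
    and Y_form: "\<And>i z e. e < K i \<Longrightarrow> Y i z e = A i z + B i e + (if z then C i e else 0)"
    and B0: "\<And>i. B i 0 = 0"
    and C0: "\<And>i. C i 0 = 0"
  shows "((AE Z in measure_pmf p. (\<Sum>i\<in>UNIV. ind E i True 0 Z) > 0 \<and> (\<Sum>i\<in>UNIV. ind E i False 0 Z) > 0) \<longrightarrow>
           measure_pmf.expectation p (beta_hat1 Y E) =
             (\<Sum>i\<in>UNIV. A i True * beta_w p E i True 0 - A i False * beta_w p E i False 0))
       \<and> ((AE Z in measure_pmf p. (\<Sum>i\<in>UNIV. ind E i True 1 Z) > 0 \<and> (\<Sum>i\<in>UNIV. ind E i False 0 Z) > 0) \<longrightarrow>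
           measure_pmf.expectation p (beta_hat2 Y E) =
             (\<Sum>i\<in>UNIV. A i True * beta_w p E i True 1 - A i False * beta_w p E i False 0)
             + (\<Sum>i\<in>UNIV. B i 1 * beta_w p E i True 1)
             + (\<Sum>i\<in>UNIV. C i 1 * beta_w p E i True 1))"
  proof -
  have K1: "\<And>i. 1 < K i" using K2 by (metis Suc_1 Suc_le_lessD)
  have fin: "finite (set_pmf p)" by (rule finite_subset[of _ UNIV]) auto
  have int: "\<And>f::('u \<Rightarrow> bool) \<Rightarrow> real. integrable (measure_pmf p) f"
    by (rule integrable_measure_pmf_finite[OF fin])
  have Y0: "\<And>i z. Y i z 0 = A i z" using Y_form[of 0] K1 B0 C0
    by (metis add.right_neutral gr_implies_not0 not_gr_zero)
  have Y1: "\<And>i. Y i True 1 = A i True + B i 1 + C i 1" using Y_form K1 by simp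
  have h1: "measure_pmf.expectation p (beta_hat1 Y E) =
             (\<Sum>i\<in>UNIV. A i True * beta_w p E i True 0 - A i False * beta_w p E i False 0)"
    unfolding beta_hat1_def
    by (simp add: Bochner_Integration.integral_diff[OF int int] exp_cm Y0 sum_subtractf)
  have h2: "measure_pmf.expectation p (beta_hat2 Y E) =
             (\<Sum>i\<in>UNIV. A i True * beta_w p E i True 1 - A i False * beta_w p E i False 0)
             + (\<Sum>i\<in>UNIV. B i 1 * beta_w p E i True 1)
             + (\<Sum>i\<in>UNIV. C i 1 * beta_w p E i True 1)"
    unfolding beta_hat2_def
    by (simp add: Bochner_Integration.integral_diff[OF int int] exp_cm Y0 Y1 Y1[simplified] sum_subtractf
        sum.distrib[symmetric] algebra_simps)
  show ?thesis using h1 h2 by blast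
qed

end
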